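(* Let $1\le k<n$, let $C=[c_{ij}]$ be an $n\times n$ pairwise comparison matrix (all entries positive, $c_{ij}=1/c_{ji}$, $c_{ii}=1$), and let $C_k$ be its upper-left $k\times k$ submatrix. Let $A_k=I_k-\frac{1}{n-1}(C_k-I_k)$, i.e. $A_k$ has entries $1$ on the diagonal and $-\frac{1}{n-1}c_{ij}$ off the diagonal ($1\le i\ne j\le k$). If $k=1$, or if $1<k<n$ and $\mathit{CI}(C_k)<\frac{n-k}{k-1}$, then $A_k$ is invertible; consequently, for any positive reference weights $w(a_{k+1}),\dots,w(a_n)$, the arithmetic HRE system $A_k w=b$, where $w=(w(a_1),\dots,w(a_k))^T$ and $b_i=\frac{1}{n-1}\sum_{j=k+1}^n c_{ij}w(a_j)$ for $i=1,\dots,k$, has a unique solution.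
   Context: Alternatives $a_1,\dots,a_n$; $a_1,\dots,a_k$ have unknown weights and $a_{k+1},\dots,a_n$ are reference alternatives with known positive weights $w(a_{k+1}),\dots,w(a_n)$. For a $k\times k$ pairwise comparison matrix $M$ with $k\ge 2$, Saaty's consistency index is $\mathit{CI}(M)=\frac{\rho(M)-k}{k-1}$, where $\rho(M)$ is the spectral radius of $M$ (which, for a positive matrix, is its Perron eigenvalue). *)

theory Defs
  imports "Jordan_Normal_Form.Matrix" "Jordan_Normal_Form.Spectral_Radius"
begin

definition pc_matrix :: "nat \<Rightarrow> real mat \<Rightarrow> bool" where
  "pc_matrix n C \<longleftrightarrow> C \<in> carrier_mat n n \<and>
     (\<forall>i<n. \<forall>j<n. C $$ (i,j) > 0 \<and> C $$ (i,j) = 1 / C $$ (j,i)) \<and>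
     (\<forall>i<n. C $$ (i,i) = 1)"

definition upper_left :: "nat \<Rightarrow> real mat \<Rightarrow> real mat" where
  "upper_left k C = mat k k (\<lambda>(i,j). C $$ (i,j))"

definition CI :: "real mat \<Rightarrow> real" where
  "CI M = (spectral_radius (map_mat complex_of_real M) - real (dim_row M))
          / (real (dim_row M) - 1)"

definition HRE_A :: "nat \<Rightarrow> nat \<Rightarrow> real mat \<Rightarrow> real mat" where
  "HRE_A n k C = 1\<^sub>m k - (1 / (real n - 1)) \<cdot>\<^sub>m (upper_left k C - 1\<^sub>m k)"

text \<open>Right-hand side b_i = 1/(n-1) * sum_{j=k}^{n-1} c_ij w(a_j) (0-based).\<close>
definition HRE_b :: "nat \<Rightarrow> nat \<Rightarrow> real mat \<Rightarrow> (nat \<Rightarrow> real) \<Rightarrow> real vec" where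
  "HRE_b n k C wr = vec k (\<lambda>i. (1 / (real n - 1)) * (\<Sum>j\<in>{k..<n}. C $$ (i,j) * wr j))"

end

theory Submission
  imports Defs
begin

lemma HRE_A_eq:
  assumes "real n - 1 \<noteq> 0"
  shows "HRE_A n k C = (- 1 / (real n - 1)) \<cdot>\<^sub>m char_matrix (upper_left k C) (real n)"
  using assms
  by (intro eq_matI, auto simp: HRE_A_def upper_left_def char_matrix_def field_simps)

lemma det_HRE_A_nz:
  fixes n k :: nat and C :: "real mat"
  assumes pc: "pc_matrix n C"
    and k1: "1 \<le> k" and kn: "k < n"
    and ci: "k = 1 \<or> (1 < k \<and> CI (upper_left k C) < (real n - real k) / (real k - 1))"
  shows "det (HRE_A n k C) \<noteq> 0"
proof
  assume d0: "det (HRE_A n k C) = 0"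
  let ?Ck = "upper_left k C"
  have m: "real n - 1 \<noteq> 0" using kn k1 by auto
  have Ck: "?Ck \<in> carrier_mat k k" by (simp add: upper_left_def)
  have "det (char_matrix ?Ck (real n)) = 0"
    using d0 m Ck unfolding HRE_A_eq[OF m] by (simp add: det_smult)
  hence ev: "eigenvalue ?Ck (real n)" using eigenvalue_det[OF Ck] by simp
  show False
  proof (cases "k = 1")
    case True
    from ev obtain v where v: "eigenvector ?Ck v (real n)" unfolding eigenvalue_def by auto
    hence vc: "v \<in> carrier_vec 1" and vnz: "v \<noteq> 0\<^sub>v 1" and eq: "?Ck *\<^sub>v v = real n \<cdot>\<^sub>v v"
      using True Ck unfolding eigenvector_def by auto
    have v0: "v $ 0 \<noteq> 0"
    proof
      assume "v $ 0 = 0"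
      hence "v = 0\<^sub>v 1" using vc by (intro eq_vecI) auto
      with vnz show False by simp
    qed
    have "\<forall>i<n. C $$ (i,i) = 1" using pc unfolding pc_matrix_def by blast
    hence c00: "C $$ (0,0) = 1" using kn by simp
    have "(?Ck *\<^sub>v v) $ 0 = v $ 0"
      using vc True c00 by (simp add: upper_left_def mult_mat_vec_def scalar_prod_def)
    moreover have "(real n \<cdot>\<^sub>v v) $ 0 = real n * v $ 0" using vc by simp
    ultimately have "v $ 0 = real n * v $ 0" using eq by simp
    hence "real n = 1" using v0 by simp
    thus False using kn True by simp
  next
    case False
    with ci have k2: "1 < k" and ciK: "CI ?Ck < (real n - real k) / (real k - 1)" by auto
    have "poly (char_poly ?Ck) (real n) = 0" using ev eigenvalue_root_char_poly[OF Ck] by simp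
    hence "poly (map_poly complex_of_real (char_poly ?Ck)) (complex_of_real (real n)) = 0"
      using of_real_hom.poly_map_poly[of "char_poly ?Ck" "real n"] by simp
    hence "poly (char_poly (map_mat complex_of_real ?Ck)) (complex_of_real (real n)) = 0"
      using of_real_hom.char_poly_hom[OF Ck] by metis
    moreover have MC: "map_mat complex_of_real ?Ck \<in> carrier_mat k k" using Ck by simp
    ultimately have "eigenvalue (map_mat complex_of_real ?Ck) (complex_of_real (real n))"
      using eigenvalue_root_char_poly[OF MC] by simp
    hence "complex_of_real (real n) \<in> spectrum (map_mat complex_of_real ?Ck)"
      unfolding spectrum_def by simp
    hence "norm (complex_of_real (real n)) \<in> norm ` spectrum (map_mat complex_of_real ?Ck)"
      by (rule imageI)
    hence "norm (complex_of_real (real n)) \<le> spectral_radius (map_mat complex_of_real ?Ck)"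
      using spectral_radius_mem_max(2)[OF MC] k2 by blast
    hence rho: "real n \<le> spectral_radius (map_mat complex_of_real ?Ck)" by simp
    have dr: "dim_row ?Ck = k" using Ck by simp
    have "(real n - real k) / (real k - 1) \<le> CI ?Ck"
      unfolding CI_def dr using rho k2 by (intro divide_right_mono) auto
    with ciK show False by simp
  qed
qed

theorem mainTheorem1:
  fixes n k :: nat and C :: "real mat"
  assumes "pc_matrix n C"
    and "1 \<le> k" and "k < n"
    and "k = 1 \<or> (1 < k \<and> CI (upper_left k C) < (real n - real k) / (real k - 1))"
  shows "invertible_mat (HRE_A n k C) \<and>
         (\<forall>wr :: nat \<Rightarrow> real. (\<forall>j. k \<le> j \<and> j < n \<longrightarrow> wr j > 0) \<longrightarrow>
            (\<exists>!w. w \<in> carrier_vec k \<and> HRE_A n k C *\<^sub>v w = HRE_b n k C wr))"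
proof -
  let ?A = "HRE_A n k C"
  have Ac: "?A \<in> carrier_mat k k" unfolding HRE_A_def
    by (intro minus_carrier_mat smult_carrier_mat) (simp add: upper_left_def minus_carrier_mat)
  have "?A \<in> Units (ring_mat TYPE(real) k k)"
    by (rule det_non_zero_imp_unit[OF Ac det_HRE_A_nz[OF assms]])
  then obtain B where B: "B \<in> carrier_mat k k" and AB: "?A * B = 1\<^sub>m k" and BA: "B * ?A = 1\<^sub>m k"
    unfolding Units_def ring_mat_def by auto
  have inv: "invertible_mat ?A"
    unfolding invertible_mat_def inverts_mat_def using Ac B AB BA by auto
  have "\<exists>!w. w \<in> carrier_vec k \<and> ?A *\<^sub>v w = HRE_b n k C wr" for wr
  proof
    let ?b = "HRE_b n k C wr"
    have bc: "?b \<in> carrier_vec k" by (simp add: HRE_b_def)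
    have "?A *\<^sub>v (B *\<^sub>v ?b) = (?A * B) *\<^sub>v ?b"
      using assoc_mult_mat_vec[OF Ac B bc] by simp
    also have "\<dots> = ?b" using AB bc by simp
    finally show "B *\<^sub>v ?b \<in> carrier_vec k \<and> ?A *\<^sub>v (B *\<^sub>v ?b) = ?b"
      using B bc by simp
    fix w assume w: "w \<in> carrier_vec k \<and> ?A *\<^sub>v w = ?b"
    hence "B *\<^sub>v ?b = (B * ?A) *\<^sub>v w" using assoc_mult_mat_vec[OF B Ac, of w] by simp
    thus "w = B *\<^sub>v ?b" using BA w by simp
  qed
  with inv show ?thesis by blast
qed

end
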